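(* Fix $p\in(0,1)$ and let $\Phi_{\mathsf{Even}}=\sum_{v\in\mathsf{Even}}2^{-N_p(v)}$, $\Phi_{\mathsf{Odd}}=\sum_{v\in\mathsf{Odd}}2^{-N_p(v)}$. Then: 1. $\mathbb E[\Phi_{\mathsf{Even}}]=\mathbb E[\Phi_{\mathsf{Odd}}]=\tfrac12(2-p)^d$; 2. $\mathrm{Var}(\Phi_{\mathsf{Even}})=\mathrm{Var}(\Phi_{\mathsf{Odd}})=\tfrac12(\tfrac{4-3p}{2})^d(1-o(1))$ as $d\to\infty$; 3. $\mathrm{Cov}(\Phi_{\mathsf{Even}},\Phi_{\mathsf{Odd}})/\mathrm{Var}(\Phi_{\mathsf{Even}})$ decays exponentially in $d$.
   Context: Setup: - $Q_d=\{0,1\}^d$ is the hypercube graph. - $\mathsf{Even}$ and $\mathsf{Odd}$ are the vertices of even and odd Hamming weight. - $Q_{d,p}$ is obtained by retaining each edge independently with probability $p$. - $N_p(v)$ is the number of neighbors of $v$ in $Q_{d,p}$. *)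

theory Defs
  imports "HOL-Probability.Probability" "HOL-Library.Landau_Symbols"
begin

definition hc_vertices :: "nat \<Rightarrow> bool list set" where
  "hc_vertices d = {xs. length xs = d}"

definition hweight :: "bool list \<Rightarrow> nat" where
  "hweight xs = length (filter id xs)"

definition hdist :: "bool list \<Rightarrow> bool list \<Rightarrow> nat" where
  "hdist xs ys = length (filter (\<lambda>(a,b). a \<noteq> b) (zip xs ys))"

definition hc_edges :: "nat \<Rightarrow> bool list set set" where
  "hc_edges d = {{u, v} | u v. u \<in> hc_vertices d \<and> v \<in> hc_vertices d \<and> hdist u v = 1}"

definition Even_vertices :: "nat \<Rightarrow> bool list set" where
  "Even_vertices d = {v \<in> hc_vertices d. even (hweight v)}"

definition Odd_vertices :: "nat \<Rightarrow> bool list set" where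
  "Odd_vertices d = {v \<in> hc_vertices d. odd (hweight v)}"

text \<open>The random subgraph Q_{d,p}: each edge retained independently with probability p.
  An outcome is the indicator function of the retained edge set.\<close>
definition Qdp :: "nat \<Rightarrow> real \<Rightarrow> (bool list set \<Rightarrow> bool) pmf" where
  "Qdp d p = Pi_pmf (hc_edges d) False (\<lambda>_. bernoulli_pmf p)"

definition Np :: "nat \<Rightarrow> (bool list set \<Rightarrow> bool) \<Rightarrow> bool list \<Rightarrow> nat" where
  "Np d G v = card {e \<in> hc_edges d. v \<in> e \<and> G e}"

definition Phi_Even :: "nat \<Rightarrow> (bool list set \<Rightarrow> bool) \<Rightarrow> real" where
  "Phi_Even d G = (\<Sum>v\<in>Even_vertices d. (1/2) ^ Np d G v)"

definition Phi_Odd :: "nat \<Rightarrow> (bool list set \<Rightarrow> bool) \<Rightarrow> real" where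
  "Phi_Odd d G = (\<Sum>v\<in>Odd_vertices d. (1/2) ^ Np d G v)"

definition pmf_cov :: "'a pmf \<Rightarrow> ('a \<Rightarrow> real) \<Rightarrow> ('a \<Rightarrow> real) \<Rightarrow> real" where
  "pmf_cov M X Y = measure_pmf.expectation M (\<lambda>x. (X x - measure_pmf.expectation M X) *
                                                 (Y x - measure_pmf.expectation M Y))"

end

theory Submission
  imports Defs
begin

definition flip :: "nat \<Rightarrow> bool list \<Rightarrow> bool list" where
  "flip i v = v[i := \<not> v ! i]"

lemma finite_hc_vertices: "finite (hc_vertices d)"
  unfolding hc_vertices_def using finite_lists_length_eq[of "UNIV::bool set" d] by simp

lemma card_hc_vertices: "card (hc_vertices d) = 2 ^ d"
  unfolding hc_vertices_def using card_lists_length_eq[of "UNIV::bool set" d] by simp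

lemma finite_hc_edges: "finite (hc_edges d)"
proof -
  have "hc_edges d \<subseteq> Pow (hc_vertices d)" unfolding hc_edges_def by auto
  thus ?thesis using finite_hc_vertices by (meson finite_Pow_iff finite_subset)
qed

lemma hdist_card: "length xs = length ys \<Longrightarrow> hdist xs ys = card {i. i < length xs \<and> xs!i \<noteq> ys!i}"
  unfolding hdist_def by (simp add: length_filter_conv_card nth_zip cong: conj_cong)

lemma hdist_sym: "hdist xs ys = hdist ys xs"
proof (induction xs arbitrary: ys)
  case Nil thus ?case by (simp add: hdist_def)
next
  case (Cons x xs) thus ?case by (cases ys) (auto simp: hdist_def)
qed

lemma parity_hdist: "length u = length v \<Longrightarrow> even (hweight u + hweight v + hdist u v)"
proof (induction u v rule: list_induct2)
  case Nil thus ?case by (simp add: hweight_def hdist_def)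
next
  case (Cons x xs y ys)
  thus ?case by (auto simp: hweight_def hdist_def)
qed

lemma hdist1_parity: "length u = length v \<Longrightarrow> hdist u v = 1 \<Longrightarrow> even (hweight u) \<longleftrightarrow> odd (hweight v)"
  using parity_hdist[of u v] by auto

lemma hdist_flip: "i < length v \<Longrightarrow> hdist v (flip i v) = 1"
proof -
  assume i: "i < length v"
  have "{j. j < length v \<and> v!j \<noteq> flip i v ! j} = {i}"
    using i by (auto simp: flip_def nth_list_update)
  thus ?thesis using hdist_card[of v "flip i v"] by (simp add: flip_def)
qed

lemma hdist1_flip: assumes "length u = length v" "hdist u v = 1"
  shows "\<exists>i<length u. v = flip i u"
proof -
  have "card {j. j < length u \<and> u!j \<noteq> v!j} = 1" using assms hdist_card by simp
  then obtain i where i: "{j. j < length u \<and> u!j \<noteq> v!j} = {i}" by (meson card_1_singletonE)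
  hence "i < length u" by auto
  moreover have "v = flip i u"
  proof (rule nth_equalityI)
    show "length v = length (flip i u)" using assms by (simp add: flip_def)
    fix j assume "j < length v"
    thus "v ! j = flip i u ! j" using i assms(1)
      by (cases "j = i") (auto simp: flip_def nth_list_update)
  qed
  ultimately show ?thesis by blast
qed

definition Ev :: "nat \<Rightarrow> bool list \<Rightarrow> bool list set set" where
  "Ev d u = {e \<in> hc_edges d. u \<in> e}"

lemma edge_form: assumes "e \<in> hc_edges d"
  obtains x y where "e = {x,y}" "length x = d" "length y = d" "hdist x y = 1"
   "even (hweight x) \<longleftrightarrow> odd (hweight y)" "x \<noteq> y"
proof -
  obtain x y where xy: "e = {x,y}" "length x = d" "length y = d" "hdist x y = 1"
    using assms unfolding hc_edges_def hc_vertices_def by blast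
  have p: "even (hweight x) \<longleftrightarrow> odd (hweight y)" using hdist1_parity[of x y] xy by simp
  hence "x \<noteq> y" by blast
  thus ?thesis using that xy p by blast
qed

lemma same_parity_no_edge:
  assumes "e \<in> hc_edges d" "u \<in> e" "v \<in> e" "u \<noteq> v" "even (hweight u) \<longleftrightarrow> even (hweight v)"
  shows False
proof -
  obtain x y where xy: "e = {x,y}" "even (hweight x) \<longleftrightarrow> odd (hweight y)"
    using edge_form[OF assms(1)] by metis
  have "(u = x \<and> v = y) \<or> (u = y \<and> v = x)" using xy(1) assms(2-4) by blast
  thus False using xy(2) assms(5) by blast
qed

lemma flip_props: assumes "i < length u"
  shows "length (flip i u) = length u" "flip i u \<noteq> u" "flip i u ! i = (\<not> u ! i)"
  using assms by (auto simp: flip_def list_eq_iff_nth_eq nth_list_update)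

lemma card_Ev: assumes "u \<in> hc_vertices d" shows "card (Ev d u) = d"
proof -
  have len: "length u = d" using assms by (simp add: hc_vertices_def)
  have eq: "Ev d u = (\<lambda>i. {u, flip i u}) ` {..<d}"
  proof
    show "Ev d u \<subseteq> (\<lambda>i. {u, flip i u}) ` {..<d}"
    proof
      fix e assume "e \<in> Ev d u"
      hence e: "e \<in> hc_edges d" "u \<in> e" by (auto simp: Ev_def)
      then obtain x y where xy: "e = {x,y}" "length x = d" "length y = d" "hdist x y = 1"
        unfolding hc_edges_def hc_vertices_def by blast
      show "e \<in> (\<lambda>i. {u, flip i u}) ` {..<d}"
      proof (cases "u = x")
        case True
        then obtain i where "i < d" "y = flip i u" using hdist1_flip[of x y] xy by auto
        thus ?thesis using xy True by blast
      next
        case False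
        hence uy: "u = y" using xy e by blast
        have "hdist y x = 1" using xy hdist_sym by metis
        then obtain i where "i < d" "x = flip i u" using hdist1_flip[of y x] xy uy by auto
        moreover have "e = {u, flip i u}" using xy uy calculation by blast
        ultimately show ?thesis by blast
      qed
    qed
  next
    show "(\<lambda>i. {u, flip i u}) ` {..<d} \<subseteq> Ev d u"
    proof
      fix e assume "e \<in> (\<lambda>i. {u, flip i u}) ` {..<d}"
      then obtain i where i: "i < d" "e = {u, flip i u}" by blast
      have "flip i u \<in> hc_vertices d" using len i flip_props(1)[of i u] by (simp add: hc_vertices_def)
      moreover have "hdist u (flip i u) = 1" using hdist_flip[of i u] i len by simp
      ultimately have "e \<in> hc_edges d" using i(2) assms unfolding hc_edges_def by blast
      thus "e \<in> Ev d u" using i(2) unfolding Ev_def by blast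
    qed
  qed
  have inj: "inj_on (\<lambda>i. {u, flip i u}) {..<d}"
  proof
    fix i j assume ij: "i \<in> {..<d}" "j \<in> {..<d}" "{u, flip i u} = {u, flip j u}"
    have "flip i u \<noteq> u" "flip j u \<noteq> u" using ij len flip_props by auto
    moreover have "flip i u \<in> {u, flip j u}" using ij(3) by blast
    ultimately have "flip i u = flip j u" by blast
    hence "flip i u ! i = flip j u ! i" by simp
    moreover have "flip i u ! i = (\<not> u ! i)" using ij len flip_props(3) by simp
    moreover have "i \<noteq> j \<Longrightarrow> flip j u ! i = u ! i" by (simp add: flip_def)
    ultimately show "i = j" by auto
  qed
  show ?thesis using eq card_image[OF inj] by simp
qed

lemma card_Even_Odd: assumes "d \<ge> 1"
  shows "card (Even_vertices d) = 2 ^ d div 2" "card (Odd_vertices d) = 2 ^ d div 2"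
proof -
  have fin: "finite (Even_vertices d)" "finite (Odd_vertices d)"
    using finite_hc_vertices by (auto simp: Even_vertices_def Odd_vertices_def)
  have fl: "v \<in> hc_vertices d \<Longrightarrow> flip 0 v \<in> hc_vertices d \<and> (even (hweight v) \<longleftrightarrow> odd (hweight (flip 0 v)))
         \<and> flip 0 (flip 0 v) = v" for v
    using hdist_flip[of 0 v] hdist1_parity[of v "flip 0 v"] assms
    by (auto simp: hc_vertices_def flip_def)
  have inj: "inj_on (flip 0) (hc_vertices d)" by (metis fl inj_onI)
  have sub: "Even_vertices d \<subseteq> hc_vertices d" "Odd_vertices d \<subseteq> hc_vertices d"
    by (auto simp: Even_vertices_def Odd_vertices_def)
  have im: "flip 0 ` Even_vertices d \<subseteq> Odd_vertices d" "flip 0 ` Odd_vertices d \<subseteq> Even_vertices d"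
    using fl by (auto simp: Even_vertices_def Odd_vertices_def)
  have "card (Even_vertices d) \<le> card (Odd_vertices d)"
    by (rule card_inj_on_le[OF inj_on_subset[OF inj sub(1)] im(1) fin(2)])
  moreover have "card (Odd_vertices d) \<le> card (Even_vertices d)"
    by (rule card_inj_on_le[OF inj_on_subset[OF inj sub(2)] im(2) fin(1)])
  moreover have "card (Even_vertices d) + card (Odd_vertices d) = 2 ^ d"
  proof -
    have "hc_vertices d = Even_vertices d \<union> Odd_vertices d" "Even_vertices d \<inter> Odd_vertices d = {}"
      by (auto simp: Even_vertices_def Odd_vertices_def)
    thus ?thesis using card_Un_disjoint[OF fin] card_hc_vertices by metis
  qed
  ultimately show "card (Even_vertices d) = 2 ^ d div 2" "card (Odd_vertices d) = 2 ^ d div 2" by auto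
qed

lemma prod_if_const:
  fixes x :: real
  assumes "finite A" "B \<subseteq> A"
  shows "(\<Prod>e\<in>A. if e \<in> B then x else 1) = x ^ card B"
proof -
  have "(\<Prod>e\<in>A. if e \<in> B then x else 1) = (\<Prod>e\<in>A \<inter> {e. e \<in> B}. x) * (\<Prod>e\<in>A \<inter> - {e. e \<in> B}. 1)"
    by (rule prod.If_cases[OF assms(1)])
  also have "A \<inter> {e. e \<in> B} = B" using assms(2) by blast
  finally show ?thesis by simp
qed

lemma finite_set_Qdp: "finite (set_pmf (Qdp d p))"
proof -
  have "set_pmf (Qdp d p) \<subseteq> PiE_dflt (hc_edges d) False (set_pmf \<circ> (\<lambda>_. bernoulli_pmf p))"
    unfolding Qdp_def by (rule set_Pi_pmf_subset'[OF finite_hc_edges])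
  moreover have "finite (PiE_dflt (hc_edges d) False (set_pmf \<circ> (\<lambda>_. bernoulli_pmf p)))"
    by (rule finite_PiE_dflt[OF finite_hc_edges]) simp
  ultimately show ?thesis by (rule finite_subset)
qed

lemma int_Qdp[simp]: "integrable (measure_pmf (Qdp d p)) (f :: _ \<Rightarrow> real)"
  by (rule integrable_measure_pmf_finite[OF finite_set_Qdp])

lemma E_prod:
  assumes p: "0 \<le> p" "p \<le> 1" and c: "\<And>e. 0 \<le> c e"
  shows "measure_pmf.expectation (Qdp d p) (\<lambda>G. \<Prod>e\<in>hc_edges d. if G e then c e else 1)
       = (\<Prod>e\<in>hc_edges d. 1 - p + p * c e)"
proof -
  have "measure_pmf.expectation (Qdp d p) (\<lambda>G. \<Prod>e\<in>hc_edges d. (\<lambda>e x. if x then c e else (1::real)) e (G e))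
      = (\<Prod>e\<in>hc_edges d. measure_pmf.expectation (bernoulli_pmf p) (\<lambda>x. if x then c e else (1::real)))"
    unfolding Qdp_def
    by (rule expectation_prod_Pi_pmf[OF finite_hc_edges])
       (auto intro: integrable_measure_pmf_finite c)
  also have "\<dots> = (\<Prod>e\<in>hc_edges d. 1 - p + p * c e)"
    using p by (intro prod.cong) (auto simp: algebra_simps)
  finally show ?thesis by simp
qed

definition cw :: "bool list \<Rightarrow> bool list set \<Rightarrow> real" where
  "cw u e = (if u \<in> e then 1/2 else 1)"

lemma pow_Np: "(1/2::real) ^ Np d G v = (\<Prod>e\<in>hc_edges d. if G e then cw v e else 1)"
proof -
  have "(\<Prod>e\<in>hc_edges d. if G e then cw v e else 1) = (\<Prod>e\<in>hc_edges d. if e \<in> {e \<in> hc_edges d. v \<in> e \<and> G e} then 1/2 else 1)"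
    by (intro prod.cong) (auto simp: cw_def)
  also have "\<dots> = (1/2) ^ Np d G v"
    unfolding Np_def by (rule prod_if_const[OF finite_hc_edges]) auto
  finally show ?thesis by simp
qed

lemma pow_Np2: "(1/2::real) ^ Np d G u * (1/2) ^ Np d G v = (\<Prod>e\<in>hc_edges d. if G e then cw u e * cw v e else 1)"
  unfolding pow_Np prod.distrib[symmetric] by (intro prod.cong) auto

definition sp :: "real \<Rightarrow> real" where "sp p = 1 - p/2"
definition ap :: "real \<Rightarrow> real" where "ap p = 1 - 3*p/4"
definition bp :: "real \<Rightarrow> real" where "bp p = sp p ^ 2"

context
  fixes p :: real
  assumes p: "0 < p" "p < 1"
begin


lemma consts_pos: "0 < sp p" "0 < ap p" "0 < bp p" "bp p < ap p"
proof -
  show "0 < sp p" "0 < ap p" using p by (auto simp: sp_def ap_def)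
  thus "0 < bp p" by (simp add: bp_def)
  have "p * p < p" using p by (simp add: mult_less_cancel_left1)
  thus "bp p < ap p" by (simp add: sp_def ap_def bp_def power2_eq_square algebra_simps)
qed

lemma E1: assumes "u \<in> hc_vertices d"
  shows "measure_pmf.expectation (Qdp d p) (\<lambda>G. (1/2::real) ^ Np d G u) = sp p ^ d"
proof -
  have "measure_pmf.expectation (Qdp d p) (\<lambda>G. (1/2::real) ^ Np d G u)
       = (\<Prod>e\<in>hc_edges d. 1 - p + p * cw u e)"
    unfolding pow_Np using p by (intro E_prod) (auto simp: cw_def)
  also have "\<dots> = (\<Prod>e\<in>hc_edges d. if e \<in> Ev d u then sp p else 1)"
    by (intro prod.cong) (auto simp: cw_def Ev_def sp_def)
  also have "\<dots> = sp p ^ card (Ev d u)"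
    by (rule prod_if_const[OF finite_hc_edges]) (auto simp: Ev_def)
  finally show ?thesis using card_Ev[OF assms] by simp
qed

lemma E2: assumes "u \<in> hc_vertices d" "v \<in> hc_vertices d"
  shows "measure_pmf.expectation (Qdp d p) (\<lambda>G. (1/2::real) ^ Np d G u * (1/2) ^ Np d G v)
     = bp p ^ d * (ap p / bp p) ^ card (Ev d u \<inter> Ev d v)"
proof -
  have "measure_pmf.expectation (Qdp d p) (\<lambda>G. (1/2::real) ^ Np d G u * (1/2) ^ Np d G v)
       = (\<Prod>e\<in>hc_edges d. 1 - p + p * (cw u e * cw v e))"
    unfolding pow_Np2 using p by (intro E_prod) (auto simp: cw_def)
  also have "\<dots> = (\<Prod>e\<in>hc_edges d. (if e \<in> Ev d u then sp p else 1) * (if e \<in> Ev d v then sp p else 1)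
                     * (if e \<in> Ev d u \<inter> Ev d v then ap p / bp p else 1))"
    using consts_pos by (intro prod.cong) (auto simp: cw_def Ev_def sp_def ap_def bp_def power2_eq_square)
  also have "\<dots> = sp p ^ card (Ev d u) * sp p ^ card (Ev d v) * (ap p/bp p) ^ card (Ev d u \<inter> Ev d v)"
    unfolding prod.distrib
    by (subst (1 2 3) prod_if_const[OF finite_hc_edges]) (auto simp: Ev_def)
  finally show ?thesis using card_Ev[OF assms(1)] card_Ev[OF assms(2)]
    by (simp add: bp_def power_mult_distrib power2_eq_square power_mult[symmetric])
qed

end

lemma finite_Ev: "finite (Ev d u)"
  using finite_hc_edges unfolding Ev_def by simp

lemma Ev_sub: "Ev d u \<subseteq> hc_edges d" unfolding Ev_def by auto

lemma Ev_pair_sub: assumes "u \<noteq> v" shows "Ev d u \<inter> Ev d v \<subseteq> {{u,v}}"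
proof
  fix e assume "e \<in> Ev d u \<inter> Ev d v"
  hence e: "e \<in> hc_edges d" "u \<in> e" "v \<in> e" by (auto simp: Ev_def)
  obtain x y where "e = {x,y}" using edge_form[OF e(1)] by metis
  thus "e \<in> {{u,v}}" using e assms by blast
qed

lemma k_le1: "u \<noteq> v \<Longrightarrow> card (Ev d u \<inter> Ev d v) \<le> 1"
  using card_mono[OF _ Ev_pair_sub] by fastforce

lemma same_parity_disj:
  assumes "u \<noteq> v" "even (hweight u) \<longleftrightarrow> even (hweight v)"
  shows "Ev d u \<inter> Ev d v = {}"
  using same_parity_no_edge[of _ d u v] assms unfolding Ev_def by blast

lemma sum_k_le:
  assumes u: "u \<in> Even_vertices d"
  shows "(\<Sum>v\<in>Odd_vertices d. card (Ev d u \<inter> Ev d v)) \<le> d"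
proof -
  have finO: "finite (Odd_vertices d)" using finite_hc_vertices
    by (auto simp: Odd_vertices_def)
  have disj: "\<forall>v\<in>Odd_vertices d. \<forall>v'\<in>Odd_vertices d. v \<noteq> v' \<longrightarrow>
      (Ev d u \<inter> Ev d v) \<inter> (Ev d u \<inter> Ev d v') = {}"
  proof (intro ballI impI)
    fix v v' assume vv: "v \<in> Odd_vertices d" "v' \<in> Odd_vertices d" "v \<noteq> v'"
    have uv: "u \<noteq> v" "u \<noteq> v'" using u vv by (auto simp: Even_vertices_def Odd_vertices_def)
    show "(Ev d u \<inter> Ev d v) \<inter> (Ev d u \<inter> Ev d v') = {}"
      using Ev_pair_sub[OF uv(1), of d] Ev_pair_sub[OF uv(2), of d] vv(3) by (auto simp: doubleton_eq_iff)
  qed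
  have "(\<Sum>v\<in>Odd_vertices d. card (Ev d u \<inter> Ev d v)) = card (\<Union>v\<in>Odd_vertices d. Ev d u \<inter> Ev d v)"
    by (rule card_UN_disjoint[symmetric, OF finO]) (use finite_Ev disj in auto)
  also have "\<dots> \<le> card (Ev d u)" by (rule card_mono[OF finite_Ev]) auto
  also have "\<dots> = d" using card_Ev u by (auto simp: Even_vertices_def)
  finally show ?thesis .
qed

lemma cov_eq:
  "pmf_cov (Qdp d p) X Y = measure_pmf.expectation (Qdp d p) (\<lambda>G. X G * Y G)
     - measure_pmf.expectation (Qdp d p) X * measure_pmf.expectation (Qdp d p) Y"
proof -
  let ?E = "measure_pmf.expectation (Qdp d p)"
  have "pmf_cov (Qdp d p) X Y = ?E (\<lambda>G. X G * Y G - ?E X * Y G - ?E Y * X G + ?E X * ?E Y)"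
    unfolding pmf_cov_def by (intro Bochner_Integration.integral_cong) (auto simp: algebra_simps)
  also have "\<dots> = ?E (\<lambda>G. X G * Y G) - ?E X * ?E Y - ?E Y * ?E X + ?E X * ?E Y"
    by (simp add: Bochner_Integration.integral_add Bochner_Integration.integral_diff)
  finally show ?thesis by simp
qed

context
  fixes p :: real
  assumes p: "0 < p" "p < 1"
begin

lemma E_Phi: assumes "P \<subseteq> hc_vertices d"
  shows "measure_pmf.expectation (Qdp d p) (\<lambda>G. \<Sum>v\<in>P. (1/2::real) ^ Np d G v) = card P * sp p ^ d"
proof -
  have "measure_pmf.expectation (Qdp d p) (\<lambda>G. \<Sum>v\<in>P. (1/2::real) ^ Np d G v)
     = (\<Sum>v\<in>P. measure_pmf.expectation (Qdp d p) (\<lambda>G. (1/2::real) ^ Np d G v))"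
    by (rule Bochner_Integration.integral_sum) simp
  also have "\<dots> = (\<Sum>v\<in>P. sp p ^ d)"
    using E1[OF p] assms by (intro sum.cong) auto
  finally show ?thesis by simp
qed

lemma E_Phi2: assumes "P \<subseteq> hc_vertices d" "Q \<subseteq> hc_vertices d"
  shows "measure_pmf.expectation (Qdp d p) (\<lambda>G. (\<Sum>u\<in>P. (1/2::real) ^ Np d G u) * (\<Sum>v\<in>Q. (1/2::real) ^ Np d G v))
     = (\<Sum>u\<in>P. \<Sum>v\<in>Q. bp p ^ d * (ap p / bp p) ^ card (Ev d u \<inter> Ev d v))"
proof -
  have "measure_pmf.expectation (Qdp d p) (\<lambda>G. (\<Sum>u\<in>P. (1/2::real) ^ Np d G u) * (\<Sum>v\<in>Q. (1/2::real) ^ Np d G v))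
    = measure_pmf.expectation (Qdp d p) (\<lambda>G. \<Sum>u\<in>P. \<Sum>v\<in>Q. (1/2::real) ^ Np d G u * (1/2::real) ^ Np d G v)"
    by (simp add: sum_product)
  also have "\<dots> = (\<Sum>u\<in>P. \<Sum>v\<in>Q. measure_pmf.expectation (Qdp d p) (\<lambda>G. (1/2::real) ^ Np d G u * (1/2::real) ^ Np d G v))"
    by (simp add: Bochner_Integration.integral_sum)
  also have "\<dots> = (\<Sum>u\<in>P. \<Sum>v\<in>Q. bp p ^ d * (ap p / bp p) ^ card (Ev d u \<inter> Ev d v))"
    using assms by (intro sum.cong refl E2[OF p]) auto
  finally show ?thesis .
qed

lemma Var_Phi:
  assumes P: "P \<subseteq> hc_vertices d" and par: "\<And>u v. u \<in> P \<Longrightarrow> v \<in> P \<Longrightarrow> even (hweight u) \<longleftrightarrow> even (hweight v)"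
  shows "measure_pmf.variance (Qdp d p) (\<lambda>G. \<Sum>v\<in>P. (1/2::real) ^ Np d G v) = card P * (ap p ^ d - bp p ^ d)"
proof -
  let ?X = "\<lambda>G. \<Sum>v\<in>P. (1/2::real) ^ Np d G v"
  have finP: "finite P" using P finite_hc_vertices finite_subset by blast
  have inner: "(\<Sum>v\<in>P. bp p ^ d * (ap p / bp p) ^ card (Ev d u \<inter> Ev d v)) = ap p ^ d + (card P - 1) * bp p ^ d"
    if u: "u \<in> P" for u
  proof -
    have "(\<Sum>v\<in>P. bp p ^ d * (ap p / bp p) ^ card (Ev d u \<inter> Ev d v))
        = (\<Sum>v\<in>P. if v = u then ap p ^ d else bp p ^ d)"
    proof (intro sum.cong refl)
      fix v assume v: "v \<in> P"
      show "bp p ^ d * (ap p / bp p) ^ card (Ev d u \<inter> Ev d v) = (if v = u then ap p ^ d else bp p ^ d)"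
      proof (cases "v = u")
        case True
        thus ?thesis using card_Ev[of u d] u P consts_pos[OF p]
          by (auto simp: power_divide)
      next
        case False
        thus ?thesis using same_parity_disj[of u v d] par[OF u v] by auto
      qed
    qed
    also have "\<dots> = ap p ^ d + (\<Sum>v\<in>P - {u}. bp p ^ d)"
      using finP u by (simp add: sum.If_cases Int_absorb1 insert_absorb Diff_eq[symmetric] Int_commute)
    also have "\<dots> = ap p ^ d + (card P - 1) * bp p ^ d"
      using finP u by (simp add: card_Diff_singleton of_nat_diff)
    finally show ?thesis .
  qed
  have V: "measure_pmf.variance (Qdp d p) ?X = measure_pmf.expectation (Qdp d p) (\<lambda>G. (?X G)\<^sup>2)
         - (measure_pmf.expectation (Qdp d p) ?X)\<^sup>2"
    by (rule measure_pmf.variance_eq) simp_all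
  have S: "measure_pmf.expectation (Qdp d p) (\<lambda>G. (?X G)\<^sup>2)
       = (\<Sum>u\<in>P. \<Sum>v\<in>P. bp p ^ d * (ap p / bp p) ^ card (Ev d u \<inter> Ev d v))"
    unfolding power2_eq_square by (rule E_Phi2[OF P P])
  have S2: "(\<Sum>u\<in>P. \<Sum>v\<in>P. bp p ^ d * (ap p / bp p) ^ card (Ev d u \<inter> Ev d v))
     = (\<Sum>u\<in>P. ap p ^ d + (card P - 1) * bp p ^ d)"
    using inner by simp
  have M: "measure_pmf.expectation (Qdp d p) ?X = card P * sp p ^ d" by (rule E_Phi[OF P])
  have "measure_pmf.variance (Qdp d p) ?X
     = card P * (ap p ^ d + (card P - 1) * bp p ^ d) - (card P * sp p ^ d)\<^sup>2"
    by (rule trans[OF V], subst S, subst S2, subst M, simp)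
  also have "\<dots> = card P * (ap p ^ d - bp p ^ d)"
  proof (cases "card P = 0")
    case True thus ?thesis by simp
  next
    case False
    hence "real (card P - 1) = real (card P) - 1" by (simp add: of_nat_diff)
    moreover have "bp p ^ d = sp p ^ d * sp p ^ d" unfolding bp_def power_mult[symmetric] mult_2 power_add by (rule refl)
    ultimately show ?thesis by (simp add: power2_eq_square algebra_simps)
  qed
  finally show ?thesis .
qed

end

lemma Phi_Even_eq: "Phi_Even d = (\<lambda>G. \<Sum>v\<in>Even_vertices d. (1/2::real) ^ Np d G v)"
  by (rule ext) (simp add: Phi_Even_def)
lemma Phi_Odd_eq: "Phi_Odd d = (\<lambda>G. \<Sum>v\<in>Odd_vertices d. (1/2::real) ^ Np d G v)"
  by (rule ext) (simp add: Phi_Odd_def)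

lemma Even_sub: "Even_vertices d \<subseteq> hc_vertices d" by (auto simp: Even_vertices_def)
lemma Odd_sub: "Odd_vertices d \<subseteq> hc_vertices d" by (auto simp: Odd_vertices_def)

lemma ratio_alg:
  fixes x y S E :: real
  assumes "0 < y" "y < x" "0 \<le> S" "S \<le> E * real (Suc n)" "0 < E"
  shows "(x - y) / y * y ^ Suc n * S / (E * (x ^ Suc n - y ^ Suc n)) \<le> real (Suc n) * (y / x) ^ n"
proof -
  have xn: "0 < x ^ n" "y ^ n \<le> x ^ n" using assms by (auto intro: power_mono)
  have "x ^ Suc n - x ^ n * (x - y) = x ^ n * y" by (simp add: algebra_simps)
  also have "\<dots> \<ge> y ^ n * y" using xn assms by (intro mult_right_mono) auto
  finally have "y ^ n * y \<le> x ^ Suc n - x ^ n * (x - y)" .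
  moreover have "y ^ Suc n = y ^ n * y" by (simp add: mult.commute)
  ultimately have D: "x ^ n * (x - y) \<le> x ^ Suc n - y ^ Suc n" by linarith
  have "(x - y) / y * y ^ Suc n * S / (E * (x ^ Suc n - y ^ Suc n)) = (x - y) * y ^ n * S / (E * (x ^ Suc n - y ^ Suc n))"
    using assms by simp
  also have "\<dots> \<le> (x - y) * y ^ n * (E * real (Suc n)) / (E * (x ^ n * (x - y)))"
    using assms xn D by (intro frac_le mult_left_mono mult_nonneg_nonneg mult_pos_pos) auto
  also have "\<dots> = real (Suc n) * (y / x) ^ n"
    using assms xn by (simp add: power_divide field_simps)
  finally show ?thesis .
qed

context
  fixes p :: real
  assumes p: "0 < p" "p < 1"
begin

lemma Cov_EO:
  "pmf_cov (Qdp d p) (Phi_Even d) (Phi_Odd d)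
     = (ap p - bp p) / bp p * bp p ^ d * (\<Sum>u\<in>Even_vertices d. \<Sum>v\<in>Odd_vertices d. real (card (Ev d u \<inter> Ev d v)))"
proof -
  let ?E = "Even_vertices d" and ?O = "Odd_vertices d"
  have finE: "finite ?E" and finO: "finite ?O"
    using finite_subset[OF Even_sub finite_hc_vertices] finite_subset[OF Odd_sub finite_hc_vertices] .
  have bp: "bp p ^ d = sp p ^ d * sp p ^ d" unfolding bp_def power_mult[symmetric] mult_2 power_add by (rule refl)
  have "pmf_cov (Qdp d p) (Phi_Even d) (Phi_Odd d)
     = (\<Sum>u\<in>?E. \<Sum>v\<in>?O. bp p ^ d * (ap p / bp p) ^ card (Ev d u \<inter> Ev d v)) - (card ?E * sp p ^ d) * (card ?O * sp p ^ d)"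
    unfolding cov_eq Phi_Even_eq Phi_Odd_eq
    by (simp only: E_Phi2[OF p Even_sub Odd_sub] E_Phi[OF p Even_sub] E_Phi[OF p Odd_sub])
  also have "(card ?E * sp p ^ d) * (card ?O * sp p ^ d) = (\<Sum>u\<in>?E. \<Sum>v\<in>?O. bp p ^ d)"
    by (simp add: bp)
  also have "(\<Sum>u\<in>?E. \<Sum>v\<in>?O. bp p ^ d * (ap p / bp p) ^ card (Ev d u \<inter> Ev d v)) - (\<Sum>u\<in>?E. \<Sum>v\<in>?O. bp p ^ d)
     = (\<Sum>u\<in>?E. \<Sum>v\<in>?O. (ap p - bp p) / bp p * bp p ^ d * real (card (Ev d u \<inter> Ev d v)))"
    unfolding sum_subtractf[symmetric]
  proof (intro sum.cong refl)
    fix u v assume u: "u \<in> ?E" and v: "v \<in> ?O"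
    have "u \<noteq> v" using u v by (auto simp: Even_vertices_def Odd_vertices_def)
    hence "card (Ev d u \<inter> Ev d v) = 0 \<or> card (Ev d u \<inter> Ev d v) = 1" using k_le1[of u v d] by linarith
    thus "bp p ^ d * (ap p / bp p) ^ card (Ev d u \<inter> Ev d v) - bp p ^ d
        = (ap p - bp p) / bp p * bp p ^ d * real (card (Ev d u \<inter> Ev d v))"
      using consts_pos[OF p] by (auto simp: field_simps)
  qed
  also have "\<dots> = (ap p - bp p) / bp p * bp p ^ d * (\<Sum>u\<in>?E. \<Sum>v\<in>?O. real (card (Ev d u \<inter> Ev d v)))"
    by (simp add: sum_distrib_left)
  finally show ?thesis .
qed

lemma ratio_bound:
  assumes d: "d = Suc n"
  shows "\<bar>pmf_cov (Qdp d p) (Phi_Even d) (Phi_Odd d) / measure_pmf.variance (Qdp d p) (Phi_Even d)\<bar>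
     \<le> real (Suc n) * (bp p / ap p) ^ n"
proof -
  let ?E = "Even_vertices d" and ?O = "Odd_vertices d"
  let ?S = "(\<Sum>u\<in>?E. \<Sum>v\<in>?O. real (card (Ev d u \<inter> Ev d v)))"
  have cE: "card ?E = 2 ^ n" using card_Even_Odd(1)[of d] d by simp
  have S0: "0 \<le> ?S" by (intro sum_nonneg) simp
  have "?S \<le> (\<Sum>u\<in>?E. real d)"
  proof (rule sum_mono)
    fix u assume "u \<in> ?E"
    thus "(\<Sum>v\<in>?O. real (card (Ev d u \<inter> Ev d v))) \<le> real d"
    proof -
      have "real (\<Sum>v\<in>?O. card (Ev d u \<inter> Ev d v)) \<le> real d" using sum_k_le[of u d] \<open>u \<in> ?E\<close> by (simp only: of_nat_le_iff)
      thus ?thesis by (simp only: of_nat_sum)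
    qed
  qed
  hence S1: "?S \<le> real (card ?E) * real (Suc n)" using d by simp
  have V: "measure_pmf.variance (Qdp d p) (Phi_Even d) = real (card ?E) * (ap p ^ d - bp p ^ d)"
    unfolding Phi_Even_eq by (rule Var_Phi[OF p Even_sub]) (auto simp: Even_vertices_def)
  have cpos: "0 < ap p ^ d - bp p ^ d"
  proof -
    have "bp p ^ d < ap p ^ d" using consts_pos[OF p] d
      by (intro power_strict_mono) auto
    thus ?thesis by simp
  qed
  have nonneg: "0 \<le> pmf_cov (Qdp d p) (Phi_Even d) (Phi_Odd d) / measure_pmf.variance (Qdp d p) (Phi_Even d)"
  proof -
    have "0 \<le> (ap p - bp p) / bp p * bp p ^ d * ?S" using consts_pos[OF p] S0 by simp
    moreover have "0 \<le> real (card ?E) * (ap p ^ d - bp p ^ d)" using cpos by simp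
    ultimately show ?thesis unfolding Cov_EO V by (rule divide_nonneg_nonneg)
  qed
  have "pmf_cov (Qdp d p) (Phi_Even d) (Phi_Odd d) / measure_pmf.variance (Qdp d p) (Phi_Even d)
     \<le> real (Suc n) * (bp p / ap p) ^ n"
  proof -
    have Epos: "0 < real (card ?E)" using cE by simp
    show ?thesis unfolding Cov_EO V
      using ratio_alg[OF consts_pos(3)[OF p] consts_pos(4)[OF p] S0 S1 Epos] by (simp add: d)
  qed
  thus ?thesis using nonneg by simp
qed

end

theorem lemma3p4:
  fixes p :: real
  assumes "0 < p" and "p < 1"
  shows "(\<forall>d\<ge>1. measure_pmf.expectation (Qdp d p) (Phi_Even d) = (2 - p) ^ d / 2
               \<and> measure_pmf.expectation (Qdp d p) (Phi_Odd d) = (2 - p) ^ d / 2)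
       \<and> (\<forall>d. measure_pmf.variance (Qdp d p) (Phi_Even d) = measure_pmf.variance (Qdp d p) (Phi_Odd d))
       \<and> (\<lambda>d. measure_pmf.variance (Qdp d p) (Phi_Even d)) \<sim>[sequentially] (\<lambda>d. (1/2) * ((4 - 3*p)/2) ^ d)
       \<and> (\<exists>c::real. 0 < c \<and> c < 1 \<and>
            (\<lambda>d. pmf_cov (Qdp d p) (Phi_Even d) (Phi_Odd d) / measure_pmf.variance (Qdp d p) (Phi_Even d))
              \<in> O(\<lambda>d. c ^ d))"
proof -
  note p = assms
  note cp = consts_pos[OF p]
  have VE: "measure_pmf.variance (Qdp d p) (Phi_Even d) = real (card (Even_vertices d)) * (ap p ^ d - bp p ^ d)" for d
    unfolding Phi_Even_eq by (rule Var_Phi[OF p Even_sub]) (auto simp: Even_vertices_def)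
  have VO: "measure_pmf.variance (Qdp d p) (Phi_Odd d) = real (card (Odd_vertices d)) * (ap p ^ d - bp p ^ d)" for d
    unfolding Phi_Odd_eq by (rule Var_Phi[OF p Odd_sub]) (auto simp: Odd_vertices_def)
  have card_suc: "card (Even_vertices (Suc n)) = 2 ^ n" "card (Odd_vertices (Suc n)) = 2 ^ n" for n
    using card_Even_Odd[of "Suc n"] by simp_all
  have part1: "\<forall>d\<ge>1. measure_pmf.expectation (Qdp d p) (Phi_Even d) = (2 - p) ^ d / 2
               \<and> measure_pmf.expectation (Qdp d p) (Phi_Odd d) = (2 - p) ^ d / 2"
  proof (intro allI impI)
    fix d :: nat assume "d \<ge> 1"
    then obtain n where d: "d = Suc n" by (cases d) auto
    have key: "real (2 ^ n) * sp p ^ Suc n = (2 - p) ^ Suc n / 2"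
    proof -
      have s: "sp p = (2 - p) / 2" by (simp add: sp_def)
      have "sp p ^ Suc n = (2 - p) ^ Suc n / 2 ^ Suc n" unfolding s by (rule power_divide)
      moreover have "real (2 ^ n) * ((2 - p) ^ Suc n / 2 ^ Suc n) = (2 - p) ^ Suc n / 2"
        by (simp del: power_Suc add: power_Suc[of "2::real"])
      ultimately show ?thesis by simp
    qed
    show "measure_pmf.expectation (Qdp d p) (Phi_Even d) = (2 - p) ^ d / 2
        \<and> measure_pmf.expectation (Qdp d p) (Phi_Odd d) = (2 - p) ^ d / 2"
      unfolding Phi_Even_eq Phi_Odd_eq E_Phi[OF p Even_sub] E_Phi[OF p Odd_sub]
      using key card_suc d by simp
  qed
  have part2: "\<forall>d. measure_pmf.variance (Qdp d p) (Phi_Even d) = measure_pmf.variance (Qdp d p) (Phi_Odd d)"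
  proof
    fix d show "measure_pmf.variance (Qdp d p) (Phi_Even d) = measure_pmf.variance (Qdp d p) (Phi_Odd d)"
      unfolding VE VO by (cases d) (simp_all add: card_suc)
  qed
  define r where "r = bp p / ap p"
  have r: "0 < r" "r < 1" using cp by (auto simp: r_def)
  have part3: "(\<lambda>d. measure_pmf.variance (Qdp d p) (Phi_Even d)) \<sim>[sequentially] (\<lambda>d. (1/2) * ((4 - 3*p)/2) ^ d)"
  proof (rule asymp_equivI')
    have "(\<lambda>d. 1 - r ^ d) \<longlonglongrightarrow> 1 - 0"
      using r by (intro tendsto_diff tendsto_const LIMSEQ_power_zero) simp
    moreover have "eventually (\<lambda>d. 1 - r ^ d = measure_pmf.variance (Qdp d p) (Phi_Even d) / ((1/2) * ((4 - 3*p)/2) ^ d)) sequentially"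
      using eventually_gt_at_top[of 0]
    proof eventually_elim
      case (elim d)
      then obtain n where d: "d = Suc n" by (cases d) auto
      have a: "(4 - 3*p)/2 = 2 * ap p" by (simp add: ap_def)
      have "measure_pmf.variance (Qdp d p) (Phi_Even d) / ((1/2) * ((4 - 3*p)/2) ^ d)
          = 2 ^ n * (ap p ^ d - bp p ^ d) / ((1/2) * (2 ^ d * ap p ^ d))"
        unfolding VE a d card_suc by (simp add: power_mult_distrib)
      also have "\<dots> = (ap p ^ d - bp p ^ d) / ap p ^ d" using cp d by (simp add: field_simps)
      also have "\<dots> = 1 - r ^ d" using cp by (simp add: r_def power_divide field_simps)
      finally show ?case by simp
    qed
    ultimately show "((\<lambda>d. measure_pmf.variance (Qdp d p) (Phi_Even d) / ((1/2) * ((4 - 3*p)/2) ^ d)) \<longlongrightarrow> 1) sequentially"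
      using Lim_transform_eventually by fastforce
  qed
  define c where "c = (1 + r) / 2"
  have c: "0 < c" "c < 1" "r < c" using r by (auto simp: c_def)
  have part4: "(\<lambda>d. pmf_cov (Qdp d p) (Phi_Even d) (Phi_Odd d) / measure_pmf.variance (Qdp d p) (Phi_Even d))
              \<in> O(\<lambda>d. c ^ d)"
  proof (rule bigoI)
    have "(\<lambda>n. of_nat n * (r / c) ^ n) \<longlonglongrightarrow> (0::real)"
      using r c by (intro powser_times_n_limit_0) simp
    hence ev: "eventually (\<lambda>n. of_nat n * (r / c) ^ n < (1::real)) sequentially"
      by (rule order_tendstoD) simp
    show "eventually (\<lambda>d. norm (pmf_cov (Qdp d p) (Phi_Even d) (Phi_Odd d) / measure_pmf.variance (Qdp d p) (Phi_Even d))
            \<le> (1 / r) * norm (c ^ d)) sequentially"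
      using ev eventually_gt_at_top[of 0]
    proof eventually_elim
      case (elim d)
      then obtain n where d: "d = Suc n" by (cases d) auto
      have "real d * r ^ d \<le> c ^ d"
      proof -
        have "real d * r ^ d = (real d * (r / c) ^ d) * c ^ d" using c by (simp add: power_divide)
        also have "\<dots> \<le> 1 * c ^ d" using elim c by (intro mult_right_mono) auto
        finally show ?thesis by simp
      qed
      hence "real (Suc n) * r ^ n \<le> c ^ d / r" using r d by (simp add: field_simps)
      moreover have "\<bar>pmf_cov (Qdp d p) (Phi_Even d) (Phi_Odd d) / measure_pmf.variance (Qdp d p) (Phi_Even d)\<bar>
          \<le> real (Suc n) * r ^ n"
        unfolding r_def by (rule ratio_bound[OF p d])
      ultimately show ?case using c by simp
    qed
  qed
  show ?thesis using part1 part2 part3 part4 c by blast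
qed

end
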